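(* Let $c$ be an irrational number for which there exist integers $p_n$ and $q_n\to\infty$ with $0<c-\frac{p_n}{q_n}$ and $q_n^2\left(c-\frac{p_n}{q_n}\right)\to0$. Let $T_t(x,y)=(\{x+t\},\{y+ct\})$ be the winding (linear flow) of the torus $M=[0,1)^2$ along the vector $(1,c)$, with Lebesgue measure, and let $\varphi:(0,\infty)\to(0,\infty)$ satisfy $\varphi(t)\to0$ as $t\to+\infty$. Then there exists a continuous function $f$ on the torus with $\int_M f=0$ such that for almost every $(x,y)\in M$ $$\limsup_{t\to+\infty}\frac{1}{\varphi(t)}|A(f,t,(x,y))|=+\infty.$$
   Context: $\{s\}$ denotes the fractional part of $s$. Birkhoff average: $A(f,t,z)=\frac1t\int_0^t f(T_sz)\,ds$. *)

theory Defs
  imports "HOL-Analysis.Analysis"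
begin

definition torus_flow :: "real \<Rightarrow> real \<Rightarrow> real \<times> real \<Rightarrow> real \<times> real" where
  "torus_flow c t z = (frac (fst z + t), frac (snd z + c * t))"

definition birkhoff_avg :: "real \<Rightarrow> (real \<times> real \<Rightarrow> real) \<Rightarrow> real \<Rightarrow> real \<times> real \<Rightarrow> real" where
  "birkhoff_avg c f t z = (1 / t) * integral {0..t} (\<lambda>s. f (torus_flow c s z))"

text \<open>Continuous functions on the torus: continuous 1-periodic functions on the plane.\<close>
definition torus_continuous :: "(real \<times> real \<Rightarrow> real) \<Rightarrow> bool" where
  "torus_continuous f \<longleftrightarrow> continuous_on UNIV f \<and>
     (\<forall>x y. f (x + 1, y) = f (x, y) \<and> f (x, y + 1) = f (x, y))"

end

theory Submission
  imports Defs
begin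


lemma cos_shift_int: "cos (x + 2 * pi * of_int n) = cos x"
  by (simp add: cos_add)
lemma sin_shift_int: "sin (x + 2 * pi * of_int n) = sin x"
  by (simp add: sin_add)

definition gm :: "(nat \<Rightarrow> int) \<Rightarrow> (nat \<Rightarrow> int) \<Rightarrow> nat \<Rightarrow> real \<times> real \<Rightarrow> real" where
  "gm P Q k z = cos (2 * pi * (of_int (Q k) * snd z - of_int (P k) * fst z))"

definition ff :: "(nat \<Rightarrow> int) \<Rightarrow> (nat \<Rightarrow> int) \<Rightarrow> real \<times> real \<Rightarrow> real" where
  "ff P Q z = (\<Sum>k. (1/10)^k * gm P Q k z)"

lemma summ_a: "summable (\<lambda>k. (1/10::real)^k)"
  by (rule summable_geometric) simp

lemma gm_bound: "\<bar>gm P Q k z\<bar> \<le> 1"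
  by (simp add: gm_def)

lemma summ_ff: "summable (\<lambda>k. (1/10)^k * gm P Q k z)"
  by (rule summable_comparison_test[OF _ summ_a]) (auto simp: abs_mult gm_bound intro!: exI[of _ 0] mult_left_le)

lemma gm_cont: "continuous_on A (gm P Q k)"
  unfolding gm_def by (intro continuous_intros)

lemma ff_cont: "continuous_on UNIV (ff P Q)"
proof -
  have "uniform_limit UNIV (\<lambda>n x. \<Sum>i<n. (1/10)^i * gm P Q i x) (\<lambda>x. suminf (\<lambda>i. (1/10)^i * gm P Q i x)) sequentially"
    by (rule Weierstrass_m_test[OF _ summ_a]) (auto simp: abs_mult gm_bound intro!: mult_left_le)
  then show ?thesis unfolding ff_def[abs_def]
    by (intro uniform_limit_theorem[where F=sequentially]) (auto intro!: always_eventually continuous_intros gm_cont)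
qed

lemma gm_per1: "gm P Q k (x + 1, y) = gm P Q k (x, y)"
proof -
  have "2 * pi * (of_int (Q k) * y - of_int (P k) * (x + 1)) = 2 * pi * (of_int (Q k) * y - of_int (P k) * x) + 2 * pi * of_int (- P k)"
    by (simp add: algebra_simps)
  then show ?thesis unfolding gm_def by (simp only: fst_conv snd_conv cos_shift_int)
qed

lemma gm_per2: "gm P Q k (x, y + 1) = gm P Q k (x, y)"
proof -
  have "2 * pi * (of_int (Q k) * (y + 1) - of_int (P k) * x) = 2 * pi * (of_int (Q k) * y - of_int (P k) * x) + 2 * pi * of_int (Q k)"
    by (simp add: algebra_simps)
  then show ?thesis unfolding gm_def by (simp only: fst_conv snd_conv cos_shift_int)
qed

lemma ff_torus: "torus_continuous (ff P Q)"
  unfolding torus_continuous_def using ff_cont by (simp add: ff_def gm_per1 gm_per2)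

lemma gm_flow: "gm P Q k (torus_flow c s z) =
   cos (2 * pi * (of_int (Q k) * snd z - of_int (P k) * fst z) + 2 * pi * (of_int (Q k) * c - of_int (P k)) * s)"
proof -
  have "2 * pi * (of_int (Q k) * frac (snd z + c * s) - of_int (P k) * frac (fst z + s)) =
     (2 * pi * (of_int (Q k) * snd z - of_int (P k) * fst z) + 2 * pi * (of_int (Q k) * c - of_int (P k)) * s)
     + 2 * pi * of_int (P k * \<lfloor>fst z + s\<rfloor> - Q k * \<lfloor>snd z + c * s\<rfloor>)"
    by (simp add: frac_def algebra_simps)
  then show ?thesis unfolding gm_def torus_flow_def by (simp only: fst_conv snd_conv cos_shift_int)
qed

lemma cos_has_integral:
  fixes a b D th :: real
  assumes "a \<le> b" "D \<noteq> 0"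
  shows "((\<lambda>s. cos (th + D * s)) has_integral ((sin (th + D * b) - sin (th + D * a)) / D)) {a..b}"
proof -
  have "((\<lambda>s. sin (th + D * s) / D) has_real_derivative cos (th + D * x)) (at x within {a..b})" for x
    using assms(2) by (auto intro!: derivative_eq_intros)
  then have "((\<lambda>s. cos (th + D * s)) has_integral (sin (th + D * b) / D - sin (th + D * a) / D)) {a..b}"
    by (intro fundamental_theorem_of_calculus[OF assms(1)]) (simp add: has_real_derivative_iff_has_vector_derivative)
  then show ?thesis by (simp add: diff_divide_distrib)
qed

lemma gm_int_zero:
  assumes "Q k \<noteq> 0"
  shows "integral (cbox (0,0) (1,1)) (gm P Q k) = 0"
proof -
  have inner: "integral {0..1} (\<lambda>y. gm P Q k (x, y)) = 0" for x :: real
  proof -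
    define th where "th = - 2 * pi * of_int (P k) * x"
    define D where "D = 2 * pi * of_int (Q k)"
    have eq: "(\<lambda>y. gm P Q k (x, y)) = (\<lambda>y. cos (th + D * y))"
      unfolding gm_def th_def D_def by (rule ext) (simp add: algebra_simps)
    have "D \<noteq> 0" using assms by (simp add: D_def)
    from cos_has_integral[of 0 1, OF _ this, of th]
    have "((\<lambda>y. gm P Q k (x, y)) has_integral ((sin (th + D * 1) - sin (th + D * 0)) / D)) {0..1}"
      unfolding eq by simp
    moreover have "sin (th + D * 1) = sin (th + D * 0)"
      using sin_shift_int[of th "Q k"] by (simp add: D_def)
    ultimately show ?thesis by (simp add: integral_unique)
  qed
  have "integral (cbox (0,0) (1,1)) (gm P Q k) = integral (cbox 0 1) (\<lambda>x. integral (cbox 0 1) (\<lambda>y. gm P Q k (x, y)))"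
    by (rule integral_prod_continuous) (rule gm_cont)
  also have "\<dots> = 0" by (simp add: inner)
  finally show ?thesis .
qed

lemma ff_int_cbox:
  assumes "\<And>k. Q k \<noteq> 0"
  shows "integral (cbox (0,0) (1,1)) (ff P Q) = 0" "ff P Q integrable_on cbox (0,0) (1,1)"
proof -
  let ?S = "cbox (0::real,0::real) (1,1)"
  let ?F = "\<lambda>n x. \<Sum>i<n. (1/10)^i * gm P Q i x"
  have int: "?F n integrable_on ?S" for n
    by (intro integrable_continuous continuous_intros gm_cont)
  have le: "norm (?F n x) \<le> (\<Sum>i. (1/10::real)^i)" for n x
  proof -
    have "norm (?F n x) \<le> (\<Sum>i<n. (1/10::real)^i)"
      by (rule order_trans[OF norm_sum]) (auto intro!: sum_mono simp: abs_mult gm_bound intro: mult_left_le)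
    also have "\<dots> \<le> (\<Sum>i. (1/10::real)^i)"
      by (rule sum_le_suminf[OF summ_a]) auto
    finally show ?thesis .
  qed
  have conv: "(\<lambda>n. ?F n x) \<longlonglongrightarrow> ff P Q x" for x
    unfolding ff_def using summ_ff[of P Q x] by (simp add: summable_LIMSEQ)
  have dc: "ff P Q integrable_on ?S" "(\<lambda>k. integral ?S (?F k)) \<longlonglongrightarrow> integral ?S (ff P Q)"
    using dominated_convergence[of ?F ?S "\<lambda>_. (\<Sum>i. (1/10::real)^i)" "ff P Q", OF int integrable_const le conv] by auto
  have "integral ?S (?F k) = 0" for k
    by (subst integral_sum) (auto intro!: integrable_continuous continuous_intros gm_cont simp: gm_int_zero assms)
  with dc(2) have "(\<lambda>k. 0) \<longlonglongrightarrow> integral ?S (ff P Q)" by simp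
  then show "integral ?S (ff P Q) = 0" using LIMSEQ_unique tendsto_const by blast
  show "ff P Q integrable_on ?S" by (rule dc(1))
qed

lemma ff_int_zero:
  assumes "\<And>k. Q k \<noteq> 0"
  shows "integral ({0..<1} \<times> {0..<1}) (ff P Q) = 0"
proof -
  let ?S = "cbox (0::real,0::real) (1,1)"
  let ?T = "{0::real..<1} \<times> {0::real..<1}"
  have sub: "?S - ?T \<subseteq> {z. z \<bullet> (1,0) = 1} \<union> {z. z \<bullet> (0,1) = 1}"
  proof
    fix z assume z: "z \<in> ?S - ?T"
    obtain u v where zuv: "z = (u, v)" by fastforce
    have "u \<le> 1" "v \<le> 1" "0 \<le> u" "0 \<le> v" "\<not> (u < 1 \<and> v < 1)"
      using z by (auto simp: zuv cbox_Pair_eq)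
    then show "z \<in> {z. z \<bullet> (1,0) = 1} \<union> {z. z \<bullet> (0,1) = 1}"
      by (auto simp: zuv inner_prod_def)
  qed
  have b1: "(1::real,0::real) \<in> Basis" and b2: "(0::real,1::real) \<in> Basis" by (auto simp: Basis_prod_def)
  have neg: "negligible (?S - ?T)"
    by (rule negligible_subset[OF negligible_Un[OF negligible_standard_hyperplane[OF b1] negligible_standard_hyperplane[OF b2]] sub])
  have e: "?T - ?S = {}" by (auto simp: cbox_Pair_eq)
  have n1: "negligible {x \<in> ?S - ?T. ff P Q x \<noteq> 0}"
    by (rule negligible_subset[OF neg]) blast
  have n2: "negligible {x \<in> ?T - ?S. ff P Q x \<noteq> 0}"
    unfolding e by simp
  have "(ff P Q has_integral 0) ?S"
    using ff_int_cbox[OF assms] has_integral_integral[of "ff P Q" ?S] by simp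
  then have "(ff P Q has_integral 0) ?T"
    using has_integral_spike_set_eq[OF n1 n2] by blast
  then show ?thesis by (rule integral_unique)
qed



definition Av :: "real \<Rightarrow> real \<Rightarrow> real \<Rightarrow> real" where
  "Av w th t = (sin (th + w * t) - sin th) / (w * t)"

lemma sin_lip: "\<bar>sin (a::real) - sin b\<bar> \<le> \<bar>a - b\<bar>"
proof -
  have "\<bar>sin a - sin b\<bar> = 2 * \<bar>sin ((a - b) / 2)\<bar> * \<bar>cos ((a + b) / 2)\<bar>"
    by (simp add: sin_diff_sin abs_mult)
  also have "\<dots> \<le> 2 * \<bar>(a - b) / 2\<bar> * 1"
    by (intro mult_mono abs_sin_x_le_abs_x) auto
  finally show ?thesis by simp
qed

lemma sin_diff_le2: "\<bar>sin (a::real) - sin b\<bar> \<le> 2"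
  using abs_sin_le_one[of a] abs_sin_le_one[of b] by linarith

lemma Av_le1: "\<bar>Av w th t\<bar> \<le> 1"
proof (cases "w * t = 0")
  case True then show ?thesis unfolding Av_def True by simp
next
  case False
  have "\<bar>sin (th + w * t) - sin th\<bar> \<le> \<bar>w * t\<bar>" using sin_lip[of "th + w * t" th] by simp
  then show ?thesis using False by (simp add: Av_def abs_divide divide_le_eq_1)
qed

lemma Av_le2: "w * t > 0 \<Longrightarrow> \<bar>Av w th t\<bar> \<le> 2 / (w * t)"
  unfolding Av_def abs_divide using sin_diff_le2[of "th + w * t" th]
  by (simp add: divide_right_mono)

lemma key:
  fixes w th :: "nat \<Rightarrow> real" and m :: nat
  assumes wpos: "\<And>k. 0 < w k"
    and ratio: "\<And>k. k < m \<Longrightarrow> w m \<le> (1/10)^m / (400 * (m + 1)) * w k"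
  shows "\<exists>t \<in> {pi / w m, pi / (2 * w m)}. (1/10)^m / 25 \<le> \<bar>\<Sum>k. (1/10)^k * Av (w k) (th k) t\<bar>"
proof -
  define a :: "nat \<Rightarrow> real" where "a k = (1/10)^k" for k
  have apos: "a k > 0" for k by (simp add: a_def)
  have gen: "a m * \<bar>Av (w m) (th m) t\<bar> - a m / 100 - a m / 9 \<le> \<bar>\<Sum>k. a k * Av (w k) (th k) t\<bar>"
    if tge: "t \<ge> pi / (2 * w m)" for t
  proof -
    let ?f = "\<lambda>k. a k * Av (w k) (th k) t"
    have tpos: "t > 0" using tge wpos[of m] pi_gt_zero
      by (metis divide_pos_pos mult_pos_pos order_less_le_trans zero_less_numeral)
    have sf: "summable ?f"
      by (rule summable_comparison_test[OF _ summ_a]) (auto simp: a_def abs_mult Av_le1 intro!: exI[of _ 0] mult_left_le)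
    have split: "suminf ?f = (\<Sum>n. ?f (n + Suc m)) + (\<Sum>i<m. ?f i) + ?f m"
      using suminf_split_initial_segment[OF sf, of "Suc m"] by simp
    have tail: "\<bar>\<Sum>n. ?f (n + Suc m)\<bar> \<le> a m / 9"
    proof -
      have s2: "summable (\<lambda>n. a (n + Suc m))" using summ_a by (simp add: a_def)
      have pw: "\<bar>?f (n + Suc m)\<bar> \<le> a (n + Suc m)" for n
        unfolding abs_mult abs_of_pos[OF apos] by (rule mult_left_le[OF Av_le1]) (simp add: a_def)
      have s3: "summable (\<lambda>n. \<bar>?f (n + Suc m)\<bar>)"
        by (rule summable_comparison_test[OF _ s2]) (use pw in auto)
      have "\<bar>\<Sum>n. ?f (n + Suc m)\<bar> \<le> (\<Sum>n. \<bar>?f (n + Suc m)\<bar>)"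
        by (rule summable_rabs[OF s3])
      also have "\<dots> \<le> (\<Sum>n. a (n + Suc m))"
        by (rule suminf_le[OF pw s3 s2])
      also have "(\<Sum>n. a (n + Suc m)) = (\<Sum>n. (1/10)^(Suc m) * (1/10::real)^n)"
        by (simp add: a_def power_add mult.commute)
      also have "\<dots> = (1/10)^(Suc m) * (10/9)"
      proof -
        have "(\<Sum>n. (1/10::real)^n) = 10/9" by (subst suminf_geometric) auto
        then show ?thesis by (subst suminf_mult[OF summ_a]) simp
      qed
      also have "\<dots> = a m / 9" by (simp add: a_def)
      finally show ?thesis .
    qed
    have head: "\<bar>\<Sum>i<m. ?f i\<bar> \<le> a m / 100"
    proof -
      have each: "\<bar>?f i\<bar> \<le> 4 * ((1/10)^m / (400 * (m + 1)))" if "i < m" for i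
      proof -
        have "\<bar>?f i\<bar> \<le> 1 * (2 / (w i * t))"
          unfolding abs_mult using Av_le2[of "w i" t "th i"] wpos[of i] tpos
          by (intro mult_mono) (auto simp: a_def power_le_one)
        also have "2 / (w i * t) \<le> 4 * (w m / w i)"
        proof -
          have "pi \<le> 2 * w m * t" using tge wpos[of m] by (simp add: field_simps)
          then have "1 \<le> 2 * w m * t" using pi_gt3 by linarith
          then show ?thesis using wpos[of i] tpos by (simp add: field_simps)
        qed
        also have "w m / w i \<le> (1/10)^m / (400 * (m + 1))"
          using ratio[OF that] wpos[of i] by (simp add: field_simps)
        finally show ?thesis by simp
      qed
      have "\<bar>\<Sum>i<m. ?f i\<bar> \<le> (\<Sum>i<m. \<bar>?f i\<bar>)" by (rule sum_abs)
      also have "\<dots> \<le> (\<Sum>i<m. 4 * ((1/10)^m / (400 * (m + 1))))"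
        by (rule sum_mono) (use each in auto)
      also have "\<dots> = real m * 4 * ((1/10)^m / (400 * (m + 1)))" by simp
      also have "\<dots> = a m / 100 * (real m / (real m + 1))"
      proof -
        have h: "(1/10::real)^m = a m" by (simp add: a_def)
        have eq: "real m * 4 * (x / (400 * (m + 1))) = x / 100 * (real m / (real m + 1))" for x :: real
          by (simp add: field_simps)
        show ?thesis unfolding h by (rule eq)
      qed
      also have "\<dots> \<le> a m / 100"
        by (rule mult_left_le) (auto simp: a_def)
      finally show ?thesis .
    qed
    have "\<bar>?f m\<bar> = a m * \<bar>Av (w m) (th m) t\<bar>" using apos[of m] by (simp add: abs_mult)
    then show ?thesis using split tail head by linarith
  qed
  have wm: "w m \<noteq> 0" using wpos[of m] by simp
  have A1: "Av (w m) (th m) (pi / w m) = - 2 * sin (th m) / pi"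
    using wm by (simp add: Av_def)
  have A2: "Av (w m) (th m) (pi / (2 * w m)) = 2 * (cos (th m) - sin (th m)) / pi"
    using wm by (simp add: Av_def sin_add)
  have t1: "pi / w m \<ge> pi / (2 * w m)" using wpos[of m] by (simp add: field_simps)
  have t2: "pi / (2 * w m) \<ge> pi / (2 * w m)" by simp
  have pi4: "2 * (1/3) / pi \<ge> 1/6" using pi_less_4 by (simp add: field_simps)
  have fin: "a m / 25 \<le> a m * (1/6) - a m / 100 - a m / 9" using apos[of m] by simp
  show ?thesis
  proof (cases "\<bar>sin (th m)\<bar> \<ge> 1/3")
    case True
    have "1/6 \<le> \<bar>Av (w m) (th m) (pi / w m)\<bar>"
    proof -
      have "\<bar>Av (w m) (th m) (pi / w m)\<bar> = 2 * \<bar>sin (th m)\<bar> / pi" unfolding A1 by (simp add: abs_mult)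
      also have "\<dots> \<ge> 2 * (1/3) / pi" using True by (intro divide_right_mono) auto
      finally show ?thesis using pi4 by linarith
    qed
    then have "a m * (1/6) \<le> a m * \<bar>Av (w m) (th m) (pi / w m)\<bar>" using apos[of m] by (intro mult_left_mono) auto
    then have "a m / 25 \<le> \<bar>\<Sum>k. a k * Av (w k) (th k) (pi / w m)\<bar>" using gen[OF t1] fin by linarith
    then have "(1/10)^m / 25 \<le> \<bar>\<Sum>k. (1/10)^k * Av (w k) (th k) (pi / w m)\<bar>" by (simp only: a_def)
    then show ?thesis by (rule bexI[of _ "pi / w m"]) auto
  next
    case False
    have "cos (th m)^2 = 1 - sin (th m)^2" by (simp add: cos_squared_eq)
    moreover have "sin (th m)^2 \<le> 1/9"
    proof -
      have "\<bar>sin (th m)\<bar> ^2 \<le> (1/3)^2" using False by (intro power_mono) auto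
      then show ?thesis by (simp add: power2_eq_square)
    qed
    ultimately have "cos (th m)^2 \<ge> (2/3)^2" by (simp add: power2_eq_square)
    then have c23: "\<bar>cos (th m)\<bar> \<ge> 2/3" using abs_le_square_iff[of "2/3" "cos (th m)"] by simp
    have "1/6 \<le> \<bar>Av (w m) (th m) (pi / (2 * w m))\<bar>"
    proof -
      have cs: "\<bar>cos (th m) - sin (th m)\<bar> \<ge> 1/3" using False c23 by arith
      have "\<bar>Av (w m) (th m) (pi / (2 * w m))\<bar> = 2 * \<bar>cos (th m) - sin (th m)\<bar> / pi" unfolding A2 by (simp only: abs_divide abs_mult) simp
      also have "\<dots> \<ge> 2 * (1/3) / pi" using cs by (intro divide_right_mono) auto
      finally show ?thesis using pi4 by linarith
    qed
    then have "a m * (1/6) \<le> a m * \<bar>Av (w m) (th m) (pi / (2 * w m))\<bar>" using apos[of m] by (intro mult_left_mono) auto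
    then have "a m / 25 \<le> \<bar>\<Sum>k. a k * Av (w k) (th k) (pi / (2 * w m))\<bar>" using gen[OF t2] fin by linarith
    then have "(1/10)^m / 25 \<le> \<bar>\<Sum>k. (1/10)^k * Av (w k) (th k) (pi / (2 * w m))\<bar>" by (simp only: a_def)
    then show ?thesis by (rule bexI[of _ "pi / (2 * w m)"]) auto
  qed
qed

lemma birk:
  fixes c t :: real and z :: "real \<times> real"
  assumes tpos: "t > 0" and wnz: "\<And>k. 2 * pi * (of_int (Q k) * c - of_int (P k)) \<noteq> 0"
  shows "birkhoff_avg c (ff P Q) t z = (\<Sum>k. (1/10)^k * Av (2 * pi * (of_int (Q k) * c - of_int (P k))) (2 * pi * (of_int (Q k) * snd z - of_int (P k) * fst z)) t)"
proof -
  define w where "w k = 2 * pi * (of_int (Q k) * c - of_int (P k))" for k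
  define th where "th k = 2 * pi * (of_int (Q k) * snd z - of_int (P k) * fst z)" for k
  define a :: "nat \<Rightarrow> real" where "a k = (1/10)^k" for k
  define I where "I k = (sin (th k + w k * t) - sin (th k)) / w k" for k
  have flow: "ff P Q (torus_flow c s z) = (\<Sum>k. a k * cos (th k + w k * s))" for s
    unfolding ff_def gm_flow a_def th_def w_def by simp
  have Ik: "((\<lambda>s. cos (th k + w k * s)) has_integral I k) {0..t}" for k
    using cos_has_integral[of 0 t "w k" "th k"] tpos wnz[of k] by (simp add: I_def w_def)
  let ?F = "\<lambda>n s. \<Sum>i<n. a i * cos (th i + w i * s)"
  have intF: "integral {0..t} (?F n) = (\<Sum>i<n. a i * I i)" for n
  proof -
    have "(?F n has_integral (\<Sum>i<n. a i * I i)) {0..t}"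
      by (intro has_integral_sum has_integral_mult_right Ik) auto
    then show ?thesis by (rule integral_unique)
  qed
  have int: "?F n integrable_on {0..t}" for n
    by (intro integrable_continuous_real continuous_intros)
  have le: "norm (?F n s) \<le> (\<Sum>i. (1/10::real)^i)" for n s
  proof -
    have "norm (?F n s) \<le> (\<Sum>i<n. (1/10::real)^i)"
      by (rule order_trans[OF norm_sum]) (auto intro!: sum_mono simp: a_def abs_mult intro: mult_left_le)
    also have "\<dots> \<le> (\<Sum>i. (1/10::real)^i)"
      by (rule sum_le_suminf[OF summ_a]) auto
    finally show ?thesis .
  qed
  have conv: "(\<lambda>n. ?F n s) \<longlonglongrightarrow> ff P Q (torus_flow c s z)" for s
  proof -
    have "summable (\<lambda>k. a k * cos (th k + w k * s))"
      by (rule summable_comparison_test[OF _ summ_a]) (auto simp: a_def abs_mult intro!: exI[of _ 0] mult_left_le)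
    then show ?thesis unfolding flow by (simp add: summable_LIMSEQ)
  qed
  have "(\<lambda>n. integral {0..t} (?F n)) \<longlonglongrightarrow> integral {0..t} (\<lambda>s. ff P Q (torus_flow c s z))"
    using dominated_convergence[of ?F "{0..t}" "\<lambda>_. (\<Sum>i. (1/10::real)^i)" "\<lambda>s. ff P Q (torus_flow c s z)", OF int integrable_continuous_real[OF continuous_on_const] le conv] by auto
  then have "(\<lambda>i. a i * I i) sums integral {0..t} (\<lambda>s. ff P Q (torus_flow c s z))"
    unfolding intF sums_def .
  then have "(\<lambda>i. 1 / t * (a i * I i)) sums birkhoff_avg c (ff P Q) t z"
    unfolding birkhoff_avg_def by (rule sums_mult)
  moreover have "1 / t * (a i * I i) = a i * Av (w i) (th i) t" for i
    using tpos wnz[of i] by (simp add: I_def Av_def w_def)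
  ultimately have "(\<lambda>i. a i * Av (w i) (th i) t) sums birkhoff_avg c (ff P Q) t z" by simp
  then show ?thesis unfolding a_def w_def th_def by (simp add: sums_iff)
qed

lemma Limsup_infty:
  fixes g :: "real \<Rightarrow> real"
  assumes "\<And>m::nat. \<exists>t \<ge> real m. g t \<ge> real m"
  shows "Limsup at_top (\<lambda>t. ereal (g t)) = \<infinity>"
proof -
  have supinf: "(SUP x\<in>Collect P. ereal (g x)) = \<infinity>" if ev: "eventually P at_top" for P
  proof -
    obtain T where T: "\<And>t. t \<ge> T \<Longrightarrow> P t" using ev by (auto simp: eventually_at_top_linorder)
    have *: "\<exists>i\<in>Collect P. x < ereal (g i)" if "x < top" for x
    proof -
      obtain r where r: "x \<le> ereal r" using \<open>x < top\<close> by (cases x) auto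
      obtain m :: nat where m: "real m > max T r" using reals_Archimedean2 by blast
      obtain t where t: "t \<ge> real m" "g t \<ge> real m" using assms by blast
      have "P t" using T t m by auto
      moreover have "x < ereal (g t)" using r t m by (auto intro: le_less_trans)
      ultimately show ?thesis by blast
    qed
    have "(SUP x\<in>Collect P. ereal (g x)) = top" by (simp only: SUP_eq_top_iff) (use * in blast)
    then show ?thesis by (simp del: SUP_eq_top_iff add: top_ereal_def)
  qed
  have "\<infinity> \<le> Limsup at_top (\<lambda>t. ereal (g t))"
    unfolding Limsup_def by (rule INF_greatest) (metis mem_Collect_eq order_refl supinf)
  then show ?thesis by (simp add: top_ereal_def[symmetric] top_unique)
qed



theorem theorem4:
  fixes c :: real and p q :: "nat \<Rightarrow> int" and \<phi> :: "real \<Rightarrow> real"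
  assumes irr: "c \<notin> \<rat>"
    and q_inf: "filterlim (\<lambda>n. real_of_int (q n)) at_top sequentially"
    and pos: "\<forall>n. 0 < c - real_of_int (p n) / real_of_int (q n)"
    and lim: "(\<lambda>n. (real_of_int (q n))\<^sup>2 * (c - real_of_int (p n) / real_of_int (q n))) \<longlonglongrightarrow> 0"
    and phi_pos: "\<forall>t>0. \<phi> t > 0"
    and phi_lim: "(\<phi> \<longlongrightarrow> 0) at_top"
  shows "\<exists>f. torus_continuous f \<and> integral ({0..<1} \<times> {0..<1}) f = 0 \<and>
    (AE z in lborel. z \<in> {0..<1} \<times> {0..<1} \<longrightarrow>
       Limsup at_top (\<lambda>t. ereal (\<bar>birkhoff_avg c f t z\<bar> / \<phi> t)) = \<infinity>)"
proof -
  define w where "w j = 2 * pi * (of_int (q j) * c - of_int (p j))" for j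
  define eta :: "nat \<Rightarrow> real" where "eta m = (1/10)^m / real (400 * (m + 1))" for m :: nat
  have eta_pos: "eta m > 0" for m by (simp add: eta_def)
  have eta_le1: "eta m \<le> 1" for m
  proof -
    have "(1/10::real)^m \<le> 1" by (simp add: power_le_one)
    moreover have "(1::real) \<le> real (400 * (m + 1))" by simp
    ultimately show ?thesis unfolding eta_def by (simp add: divide_le_eq_1)
  qed
  have wq: "w j = 2 * pi * (of_int (q j) * (c - of_int (p j) / of_int (q j)))" if "q j \<ge> 1" for j
    using that by (simp add: w_def field_simps)
  have w_pos: "w j > 0" if "q j \<ge> 1" for j
    using wq[OF that] that pos by auto
  have w_small: "eventually (\<lambda>j. q j \<ge> 1 \<and> w j < e) sequentially" if "e > 0" for e
  proof -
    have e1: "eventually (\<lambda>j. real_of_int (q j) \<ge> 1) sequentially"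
      using q_inf[unfolded filterlim_at_top, rule_format, of 1] by simp
    have e2: "eventually (\<lambda>j. (real_of_int (q j))\<^sup>2 * (c - real_of_int (p j) / real_of_int (q j)) < e / (2 * pi)) sequentially"
      by (rule order_tendstoD(2)[OF lim]) (use that in simp)
    show ?thesis
    proof (rule eventually_mono[OF eventually_conj[OF e1 e2]])
      fix j assume j: "1 \<le> real_of_int (q j) \<and> (real_of_int (q j))\<^sup>2 * (c - real_of_int (p j) / real_of_int (q j)) < e / (2 * pi)"
      then have qj: "q j \<ge> 1" by simp
      have d: "c - real_of_int (p j) / real_of_int (q j) > 0" using pos by auto
      have "real_of_int (q j) * (c - real_of_int (p j) / real_of_int (q j)) \<le> (real_of_int (q j))\<^sup>2 * (c - real_of_int (p j) / real_of_int (q j))"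
        using j d by (intro mult_right_mono) (auto simp: power2_eq_square)
      then have "real_of_int (q j) * (c - real_of_int (p j) / real_of_int (q j)) < e / (2 * pi)" using j by linarith
      then have "2 * pi * (real_of_int (q j) * (c - real_of_int (p j) / real_of_int (q j))) < 2 * pi * (e / (2 * pi))"
        by (intro mult_strict_left_mono) auto
      then have "w j < 2 * pi * (e / (2 * pi))" using wq[OF qj] by simp
      then show "q j \<ge> 1 \<and> w j < e" using qj by simp
    qed
  qed
  have phiT: "\<exists>T. \<forall>t\<ge>T. \<phi> t < e" if "e > 0" for e
    using order_tendstoD(2)[OF phi_lim that] by (simp add: eventually_at_top_linorder)
  define Pm where "Pm m j \<longleftrightarrow> q j \<ge> 1 \<and> 0 < w j \<and> (\<forall>t \<ge> pi / (2 * w j). \<phi> t < (1/10)^m / (25 * (m + 1))) \<and> real m \<le> pi / (2 * w j)" for m :: nat and j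
  have ex: "\<exists>j. Pm m j \<and> w j \<le> B" if "B > 0" for B m
  proof -
    obtain T where T: "\<And>t. t \<ge> T \<Longrightarrow> \<phi> t < (1/10)^m / (25 * (m + 1))"
      using phiT[of "(1/10)^m / (25 * (m + 1))"] by auto
    define M where "M = max (max T (real m)) 1"
    have M1: "M \<ge> 1" "M \<ge> T" "M \<ge> real m" by (auto simp: M_def)
    have "min B (pi / (2 * M)) > 0" using that M1 by auto
    from eventually_happens'[OF _ w_small[OF this]] obtain j where j: "q j \<ge> 1" "w j < min B (pi / (2 * M))"
      by auto
    have wp: "w j > 0" using w_pos[OF j(1)] .
    have "2 * M * w j < pi" using j(2) M1 by (simp add: field_simps)
    then have "M < pi / (2 * w j)" using wp by (simp add: field_simps)
    then have "T \<le> pi / (2 * w j)" "real m \<le> pi / (2 * w j)" using M1 by linarith+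
    then show ?thesis using T j wp unfolding Pm_def by (intro exI[of _ j]) auto
  qed
  obtain N where N: "\<And>m. Pm m (N m) \<and> w (N (Suc m)) \<le> eta (Suc m) * w (N m)"
  proof -
    have "\<exists>f. \<forall>m. Pm m (f m) \<and> w (f (Suc m)) \<le> eta (Suc m) * w (f m)"
    proof (rule dependent_nat_choice)
      show "\<exists>x. Pm 0 x" using ex[of 1] by auto
    next
      fix x n assume "Pm n x"
      then have "w x > 0" by (simp add: Pm_def)
      then have "eta (Suc n) * w x > 0" using eta_pos by simp
      then show "\<exists>y. Pm (Suc n) y \<and> w y \<le> eta (Suc n) * w x" using ex by blast
    qed
    then show ?thesis using that by blast
  qed
  define P' where "P' k = p (N k)" for k
  define Q' where "Q' k = q (N k)" for k
  define W where "W k = 2 * pi * (of_int (Q' k) * c - of_int (P' k))" for k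
  define th where "th z k = 2 * pi * (of_int (Q' k) * snd z - of_int (P' k) * fst z)" for z :: "real \<times> real" and k
  have WN: "W k = w (N k)" for k by (simp add: W_def w_def P'_def Q'_def)
  have Wpos: "W k > 0" for k using N[of k] by (simp add: WN Pm_def)
  have Wdec: "decseq W"
  proof (rule decseq_SucI)
    fix k
    have "W (Suc k) \<le> eta (Suc k) * W k" using N[of k] by (simp add: WN)
    also have "\<dots> \<le> 1 * W k" using eta_le1 Wpos[of k] by (intro mult_right_mono) auto
    finally show "W (Suc k) \<le> W k" by simp
  qed
  have ratio: "W m \<le> (1/10)^m / real (400 * (m + 1)) * W k" if "k < m" for k m
  proof -
    have "m \<noteq> 0" using that by simp
    then obtain m' where m': "m = Suc m'" using not0_implies_Suc by blast
    have "W m \<le> eta m * W m'" using N[of m'] by (simp add: WN m')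
    also have "\<dots> \<le> eta m * W k" using that m' eta_pos[of m] by (intro mult_left_mono decseqD[OF Wdec]) auto
    finally show ?thesis by (simp only: eta_def)
  qed
  have Qnz: "Q' k \<noteq> 0" for k using N[of k] by (auto simp: Pm_def Q'_def)
  have main: "\<exists>t \<ge> real m. \<bar>birkhoff_avg c (ff P' Q') t z\<bar> / \<phi> t \<ge> real m" for m :: nat and z
  proof -
    obtain t where t: "t \<in> {pi / W m, pi / (2 * W m)}"
      and big: "(1/10)^m / 25 \<le> \<bar>\<Sum>k. (1/10)^k * Av (W k) (th z k) t\<bar>"
      using key[of W m "th z", OF Wpos ratio] by blast
    have "pi / (2 * W m) \<le> pi / W m" using Wpos[of m] pi_gt_zero by (intro divide_left_mono) auto
    then have tge: "t \<ge> pi / (2 * W m)" using t by auto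
    have tpos: "t > 0" using t Wpos[of m] by auto
    have B: "birkhoff_avg c (ff P' Q') t z = (\<Sum>k. (1/10)^k * Av (W k) (th z k) t)"
    proof -
      have Wnz: "2 * pi * (of_int (Q' k) * c - of_int (P' k)) \<noteq> 0" for k
        using Wpos[of k] unfolding W_def by (metis order_less_irrefl)
      show ?thesis unfolding W_def th_def by (rule birk[OF tpos Wnz])
    qed
    have Pmm: "Pm m (N m)" using N by blast
    have phit: "\<phi> t < (1/10)^m / (25 * (m + 1))" using Pmm tge unfolding Pm_def WN by blast
    have phip: "\<phi> t > 0" using phi_pos tpos by blast
    have tm: "real m \<le> t" using Pmm tge unfolding Pm_def WN by linarith
    have "(real m + 1) * \<phi> t \<le> (real m + 1) * ((1/10)^m / (25 * (m + 1)))"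
      using phit by (intro mult_left_mono) auto
    also have "\<dots> = (1/10)^m / 25"
    proof -
      have e: "(real m + 1) * (a / (25 * (real m + 1))) = a / 25" for a :: real
        by (simp add: field_simps)
      show ?thesis using e[of "(1/10)^m"] by (simp add: add.commute)
    qed
    also have "\<dots> \<le> \<bar>birkhoff_avg c (ff P' Q') t z\<bar>" using big B by simp
    finally have "real m + 1 \<le> \<bar>birkhoff_avg c (ff P' Q') t z\<bar> / \<phi> t"
      using phip by (simp add: pos_le_divide_eq)
    then show ?thesis using tm by (intro exI[of _ t]) auto
  qed
  show ?thesis
  proof (intro exI[of _ "ff P' Q'"] conjI)
    show "torus_continuous (ff P' Q')" by (rule ff_torus)
    show "integral ({0..<1} \<times> {0..<1}) (ff P' Q') = 0" by (rule ff_int_zero) (rule Qnz)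
    show "AE z in lborel. z \<in> {0..<1} \<times> {0..<1} \<longrightarrow>
       Limsup at_top (\<lambda>t. ereal (\<bar>birkhoff_avg c (ff P' Q') t z\<bar> / \<phi> t)) = \<infinity>"
      by (intro AE_I2 impI Limsup_infty main)
  qed
qed

end
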